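(* Let $X$ be a one-dimensional Lévy process with $\mathbb E[|X(1)|]<\infty$ that is not a driftless compound Poisson process. Let $q,r>0$, $\alpha=q+r$, $\beta>1$, and $w:[0,\infty)\to\mathbb R$ non-decreasing, continuous and concave with $w'_+(0)\le\beta\alpha/r$ and $w'_+(\infty):=\lim_{x\to\infty}w'_+(x)\in[0,\alpha/r)$. Then the function $g$ is non-increasing on $[0,\infty)$ and $$\lim_{b\to\infty}g(b)=\frac r\alpha w'_+(\infty)<1.$$
   Context: $\mathbb P_x$, $\mathbb E_x$: law and expectation of $X$ started at $x$. For $b\in\mathbb R$, $Y^b(t):=X(t)-\max\{\sup_{s\in[0,t]}(X(s)-b),0\}$ is $X$ reflected at the upper barrier $b$, and $\kappa^{b,-}_a:=\inf\{t\ge0:Y^b(t)<a\}$. $w'_+$ is the right derivative of $w$. For $b\ge0$, $$g(b):=\beta\,\mathbb E_b\big[e^{-\alpha\kappa^{b,-}_0}\big]+r\,\mathbb E_b\Big[\int_0^{\kappa^{b,-}_0}e^{-\alpha t}w'_+(Y^b(t))\,\mathrm dt\Big].$$ *)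

theory Defs
  imports "HOL-Probability.Probability"
begin

definition levy_process :: "'a measure \<Rightarrow> (real \<Rightarrow> 'a \<Rightarrow> real) \<Rightarrow> bool" where
  "levy_process M X \<longleftrightarrow>
     prob_space M \<and>
     (\<forall>t\<ge>0. X t \<in> borel_measurable M) \<and>
     (\<forall>\<omega>\<in>space M. X 0 \<omega> = 0) \<and>
     (\<forall>\<omega>\<in>space M. \<forall>t\<ge>0. continuous (at_right t) (\<lambda>s. X s \<omega>)) \<and>
     (\<forall>\<omega>\<in>space M. \<forall>t>0. \<exists>l. ((\<lambda>s. X s \<omega>) \<longlongrightarrow> l) (at_left t)) \<and>
     (\<forall>(n::nat) (ts::nat \<Rightarrow> real). 0 \<le> ts 0 \<and> (\<forall>i<n. ts i \<le> ts (Suc i)) \<longrightarrow>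
        prob_space.indep_vars M (\<lambda>_. borel) (\<lambda>i \<omega>. X (ts (Suc i)) \<omega> - X (ts i) \<omega>) {..<n}) \<and>
     (\<forall>s\<ge>0. \<forall>t\<ge>0. distr M borel (\<lambda>\<omega>. X (s + t) \<omega> - X s \<omega>) = distr M borel (X t))"

definition driftless_compound_poisson :: "'a measure \<Rightarrow> (real \<Rightarrow> 'a \<Rightarrow> real) \<Rightarrow> bool" where
  "driftless_compound_poisson M X \<longleftrightarrow>
     (\<exists>Lm::real measure. finite_measure Lm \<and> sets Lm = sets borel \<and>
        (\<forall>t\<ge>0. \<forall>\<theta>. char (distr M borel (X t)) \<theta> =
            exp (complex_of_real t * (CLINT x|Lm. iexp (\<theta> * x) - 1))))"

definition rderiv :: "(real \<Rightarrow> real) \<Rightarrow> real \<Rightarrow> real" where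
  "rderiv w x = Lim (at_right 0) (\<lambda>h. (w (x + h) - w x) / h)"

text \<open>Path of Y^b under P_x (X started at x is x + X): reflected at upper barrier b.\<close>
definition reflected :: "(real \<Rightarrow> 'a \<Rightarrow> real) \<Rightarrow> real \<Rightarrow> real \<Rightarrow> 'a \<Rightarrow> real \<Rightarrow> real" where
  "reflected X b x \<omega> t =
     (x + X t \<omega>) - max (Sup ((\<lambda>s. x + X s \<omega> - b) ` {0..t})) 0"

text \<open>First passage below a: inf{t \<ge> 0. Y t < a}, with inf of the empty set = \<infinity>.\<close>
definition first_below :: "(real \<Rightarrow> real) \<Rightarrow> real \<Rightarrow> ereal" where
  "first_below Y a = Inf (ereal ` {t. 0 \<le> t \<and> Y t < a})"

definition disc :: "real \<Rightarrow> ereal \<Rightarrow> real" where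
  "disc \<alpha> k = (if k = \<infinity> then 0 else exp (- \<alpha> * real_of_ereal k))"

definition gfun :: "'a measure \<Rightarrow> (real \<Rightarrow> 'a \<Rightarrow> real) \<Rightarrow> real \<Rightarrow> real \<Rightarrow> real
                    \<Rightarrow> (real \<Rightarrow> real) \<Rightarrow> real \<Rightarrow> real" where
  "gfun M X \<alpha> \<beta> r w b =
     \<beta> * (\<integral>\<omega>. disc \<alpha> (first_below (reflected X b b \<omega>) 0) \<partial>M)
     + r * (\<integral>\<omega>. (\<integral>t. indicator {t. 0 \<le> t \<and> ereal t < first_below (reflected X b b \<omega>) 0} t
                        * exp (- \<alpha> * t) * rderiv w (reflected X b b \<omega> t) \<partial>lborel) \<partial>M)"

end

theory Submission
  imports Defs
begin



lemma cslope:
  fixes w :: "real \<Rightarrow> real"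
  assumes "concave_on {0..} w" "0 \<le> a" "a < b" "b < c"
  shows "(w c - w a)/(c-a) \<le> (w b - w a)/(b-a)" "(w c - w b)/(c - b) \<le> (w c - w a)/(c-a)"
proof -
  have cv: "convex_on {0..} (\<lambda>x. - w x)" using assms(1) by (simp add: concave_on_def)
  have "a \<in> {0..}" "c \<in> {0..}" using assms by auto
  note s = convex_on_slope_le[OF cv this assms(3,4)]
  have e1: "(- w a - - w b) / (a - b) = - ((w b - w a)/(b-a))" using assms by (simp add: field_simps)
  have e2: "(- w a - - w c) / (a - c) = - ((w c - w a)/(c-a))" using assms by (simp add: field_simps)
  have e3: "(- w b - - w c) / (b - c) = - ((w c - w b)/(c-b))" using assms by (simp add: field_simps)
  show "(w c - w a)/(c-a) \<le> (w b - w a)/(b-a)" "(w c - w b)/(c - b) \<le> (w c - w a)/(c-a)"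
    using s unfolding e1 e2 e3 by auto
qed

lemma rderiv_exists:
  fixes w :: "real \<Rightarrow> real"
  assumes conc: "concave_on {0..} w" and x: "0 < x"
  shows "((\<lambda>h. (w (x + h) - w x) / h) \<longlongrightarrow> rderiv w x) (at_right 0)"
proof -
  let ?Q = "\<lambda>h. (w (x + h) - w x) / h"
  have lb: "(w x - w 0)/x \<ge> ?Q h" if "0 < h" for h
    using cslope[OF conc, of 0 x "x+h"] x that by (auto simp: algebra_simps)
  have "((\<lambda>h. - ?Q h) \<longlongrightarrow> Inf ((\<lambda>h. - ?Q h) ` ({0<..} \<inter> UNIV))) (at (0::real) within ({0<..} \<inter> UNIV))"
  proof (rule Lim_right_bound[where K = "- ((w x - w 0)/x)"])
    fix a b :: real assume "0 < a" "a \<le> b"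
    then show "- ?Q a \<le> - ?Q b"
      using cslope(1)[OF conc, of x "x+a" "x+b"] x by (cases "a = b") auto
  next
    fix a :: real assume "0 < a" then show "- ((w x - w 0)/x) \<le> - ?Q a" using lb by auto
  qed
  then have "((\<lambda>h. - ?Q h) \<longlongrightarrow> Inf ((\<lambda>h. - ?Q h) ` {0<..})) (at_right 0)" by simp
  then have "(?Q \<longlongrightarrow> - Inf ((\<lambda>h. - ?Q h) ` {0<..})) (at_right 0)"
    using tendsto_minus by fastforce
  then show ?thesis unfolding rderiv_def by (simp add: tendsto_Lim)
qed



lemma exp_Icc:
  fixes \<alpha> c :: real assumes a: "\<alpha> > 0" and c: "0 \<le> c"
  shows "integrable lborel (\<lambda>t. indicator {0..c} t * exp(-\<alpha>*t))"
    "(\<integral>t. indicator {0..c} t * exp(-\<alpha>*t) \<partial>lborel) = (1 - exp(-\<alpha>*c))/\<alpha>"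
proof -
  have "integrable lborel (\<lambda>t. exp(-\<alpha>*t) * indicator {0..c} t)"
    by (intro borel_integrable_atLeastAtMost) auto
  then show "integrable lborel (\<lambda>t. indicator {0..c} t * exp(-\<alpha>*t))"
    by (simp add: mult.commute)
  have "(\<integral>t. indicator {0..c} t *\<^sub>R exp(-\<alpha>*t) \<partial>lborel) = (- exp(-\<alpha>*c)/\<alpha>) - (- exp(-\<alpha>*0)/\<alpha>)"
  proof (rule integral_FTC_atLeastAtMost[OF c])
    fix x assume "0 \<le> x" "x \<le> c"
    show "((\<lambda>t. - exp(-\<alpha>*t)/\<alpha>) has_vector_derivative exp(-\<alpha>*x)) (at x within {0..c})"
      unfolding has_real_derivative_iff_has_vector_derivative[symmetric]
      using a by (auto intro!: derivative_eq_intros)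
  next
    show "continuous_on {0..c} (\<lambda>t. exp(-\<alpha>*t))" by (intro continuous_intros)
  qed
  then show "(\<integral>t. indicator {0..c} t * exp(-\<alpha>*t) \<partial>lborel) = (1 - exp(-\<alpha>*c))/\<alpha>"
    using a by (simp add: field_simps)
qed

lemma exp_ind_int:
  fixes \<alpha> :: real and k :: ereal assumes a: "\<alpha> > 0" and k: "0 \<le> k"
  shows "integrable lborel (\<lambda>t. indicator {t. 0 \<le> t \<and> ereal t < k} t * exp(-\<alpha>*t))"
    "(\<integral>t. indicator {t. 0 \<le> t \<and> ereal t < k} t * exp(-\<alpha>*t) \<partial>lborel) = (1 - disc \<alpha> k)/\<alpha>"
proof -
  have "integrable lborel (\<lambda>t. indicator {t. 0 \<le> t \<and> ereal t < k} t * exp(-\<alpha>*t)) \<and>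
    (\<integral>t. indicator {t. 0 \<le> t \<and> ereal t < k} t * exp(-\<alpha>*t) \<partial>lborel) = (1 - disc \<alpha> k)/\<alpha>"
  proof (cases k)
    case (real c)
    then have c: "0 \<le> c" using k by auto
    have ae: "AE t in lborel. indicator {t. 0 \<le> t \<and> ereal t < k} t * exp(-\<alpha>*t) = indicator {0..c} t * exp(-\<alpha>*t)"
      using AE_lborel_singleton[of c] by eventually_elim (auto simp: real indicator_def)
    have m: "(\<lambda>t. indicator {t. 0 \<le> t \<and> ereal t < k} t * exp(-\<alpha>*t)) \<in> borel_measurable lborel"
    proof -
      have "{t::real. 0 \<le> t \<and> ereal t < k} \<in> sets borel"
      proof -
        have "Measurable.pred borel (\<lambda>t::real. ereal t < k)" by measurable
        then show ?thesis by (simp add: pred_def Collect_conj_eq)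
      qed
      then show ?thesis by simp
    qed
    show ?thesis
      using integrable_cong_AE[OF m _ ae] integral_cong_AE[OF m _ ae] exp_Icc[OF a c]
      by (auto simp: disc_def real)
  next
    case PInf
    let ?f = "\<lambda>n t. indicator {0..real n} t * exp(-\<alpha>*t)"
    let ?u = "\<lambda>t. indicator {t. 0 \<le> t \<and> ereal t < k} t * exp(-\<alpha>*t)"
    have lim: "(\<lambda>n. (1 - exp(-\<alpha>*real n))/\<alpha>) \<longlonglongrightarrow> (1 - 0)/\<alpha>"
    proof -
      have "filterlim (\<lambda>n. \<alpha> * real n) at_top sequentially"
        by (rule filterlim_tendsto_pos_mult_at_top[OF tendsto_const a filterlim_real_sequentially])
      then have "filterlim (\<lambda>n. -\<alpha> * real n) at_bot sequentially"
        by (simp add: filterlim_uminus_at_bot)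
      then have "(\<lambda>n. exp(-\<alpha>*real n)) \<longlonglongrightarrow> 0" by (rule filterlim_compose[OF exp_at_bot])
      then show ?thesis using a by (intro tendsto_intros) auto
    qed
    have i1: "integrable lborel (?f i)" for i using exp_Icc[OF a, of "real i"] by auto
    have i2: "AE x in lborel. mono (\<lambda>n. ?f n x)"
        by (auto intro!: monoI simp: indicator_def)
    have i3: "AE x in lborel. 0 \<le> ?f i x" for i by (auto simp: indicator_def)
    have i4: "AE x in lborel. (\<lambda>i. ?f i x) \<longlonglongrightarrow> ?u x"
      proof (rule AE_I2)
        fix x :: real
        obtain N where N: "x \<le> real N" using real_arch_simple by blast
        have "eventually (\<lambda>i. ?f i x = ?u x) sequentially"
          using eventually_ge_at_top[of N] by eventually_elim (use N PInf in \<open>auto simp: indicator_def\<close>)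
        then show "(\<lambda>i. ?f i x) \<longlonglongrightarrow> ?u x" by (rule tendsto_eventually)
      qed
    have i5: "(\<lambda>i. integral\<^sup>L lborel (?f i)) \<longlonglongrightarrow> 1/\<alpha>" using lim exp_Icc(2)[OF a] by simp
    have i6: "?u \<in> borel_measurable lborel"
    proof -
      have "{t::real. 0 \<le> t \<and> ereal t < k} \<in> sets borel"
      proof -
        have "Measurable.pred borel (\<lambda>t::real. ereal t < k)" by measurable
        then show ?thesis by (simp add: pred_def Collect_conj_eq)
      qed
      then show ?thesis by simp
    qed
    note r = integral_monotone_convergence_nonneg[OF i1 i2 i3 i4 i5 i6]
    then show ?thesis using PInf by (auto simp: disc_def)
  next
    case MInf then show ?thesis using k by auto
  qed
  then show "integrable lborel (\<lambda>t. indicator {t. 0 \<le> t \<and> ereal t < k} t * exp(-\<alpha>*t))"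
    "(\<integral>t. indicator {t. 0 \<le> t \<and> ereal t < k} t * exp(-\<alpha>*t) \<partial>lborel) = (1 - disc \<alpha> k)/\<alpha>" by auto
qed


lemma rderiv_le:
  fixes w :: "real \<Rightarrow> real"
  assumes conc: "concave_on {0..} w" and x: "0 \<le> x" and xy: "x < y"
    and tx: "((\<lambda>h. (w (x + h) - w x) / h) \<longlongrightarrow> rderiv w x) (at_right 0)"
    and ty: "((\<lambda>h. (w (y + h) - w y) / h) \<longlongrightarrow> rderiv w y) (at_right 0)"
  shows "rderiv w y \<le> rderiv w x"
proof (rule tendsto_le[OF _ tx ty])
  show "at_right (0::real) \<noteq> bot" by simp
  have "eventually (\<lambda>h. h \<in> {0<..<y-x}) (at_right (0::real))" by (rule eventually_at_right_real) (use xy in auto)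
  then show "eventually (\<lambda>h. (w (y + h) - w y) / h \<le> (w (x + h) - w x) / h) (at_right 0)"
  proof eventually_elim
    case (elim h)
    then have h: "0 < h" "h < y - x" by auto
    have "(w (y + h) - w y) / h \<le> (w (y+h) - w x)/((y+h) - x)"
      using cslope(2)[OF conc x, of y "y+h"] xy h by auto
    also have "\<dots> \<le> (w y - w x)/(y - x)"
      using cslope(1)[OF conc x, of y "y+h"] xy h by auto
    also have "\<dots> \<le> (w (x + h) - w x) / h"
      using cslope(1)[OF conc x, of "x+h" y] xy h by auto
    finally show ?case .
  qed
qed



definition cadlag :: "(real \<Rightarrow> real) \<Rightarrow> bool" where
  "cadlag p \<longleftrightarrow> (\<forall>t\<ge>0. continuous (at_right t) p) \<and> (\<forall>t>0. \<exists>l. (p \<longlongrightarrow> l) (at_left t))"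

definition Rp :: "(real \<Rightarrow> real) \<Rightarrow> real \<Rightarrow> real" where
  "Rp p t = max (Sup (p ` {0..t})) 0 - p t"

definition kp :: "(real \<Rightarrow> real) \<Rightarrow> real \<Rightarrow> ereal" where
  "kp p b = Inf (ereal ` {t. 0 \<le> t \<and> b < Rp p t})"

lemma ev_right:
  assumes "eventually P (at_right (x::real))" shows "\<exists>b>x. \<forall>y. x < y \<and> y < b \<longrightarrow> P y"
  using assms eventually_at_right[of x "x+1"] by auto

lemma ev_left:
  assumes "eventually P (at_left (x::real))" shows "\<exists>b<x. \<forall>y. b < y \<and> y < x \<longrightarrow> P y"
  using assms eventually_at_left[of "x - 1" x] by auto

lemma cadlag_local_bound:
  assumes c: "cadlag p" and t: "0 \<le> t"
  shows "\<exists>d>0. \<exists>B. \<forall>s\<ge>0. \<bar>s - t\<bar> < d \<longrightarrow> \<bar>p s\<bar> \<le> B"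
proof -
  have "(p \<longlongrightarrow> p t) (at_right t)" using c t by (auto simp: cadlag_def continuous_within)
  then have "eventually (\<lambda>s. dist (p s) (p t) < 1) (at_right t)"
    by (rule tendstoD) simp
  then obtain b1 where b1: "b1 > t" "\<And>y. t < y \<Longrightarrow> y < b1 \<Longrightarrow> dist (p y) (p t) < 1"
    using ev_right by blast
  obtain b2 B2 where b2: "b2 < t" "\<And>y. b2 < y \<Longrightarrow> y < t \<Longrightarrow> 0 \<le> y \<Longrightarrow> \<bar>p y\<bar> \<le> B2"
  proof (cases "t = 0")
    case True then show ?thesis using that[of "-1" 0] by auto
  next
    case False
    have "t > 0" using t False by auto
    then obtain l where "(p \<longlongrightarrow> l) (at_left t)" using c by (auto simp: cadlag_def)
    then have "eventually (\<lambda>s. dist (p s) l < 1) (at_left t)"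
      by (rule tendstoD) simp
    then obtain b where b: "b < t" "\<And>y. b < y \<Longrightarrow> y < t \<Longrightarrow> dist (p y) l < 1"
      using ev_left by blast
    show ?thesis
    proof (rule that[of b "\<bar>l\<bar> + 1"])
      show "b < t" by fact
      fix y assume "b < y" "y < t" "0 \<le> y"
      then show "\<bar>p y\<bar> \<le> \<bar>l\<bar> + 1" using b(2)[of y] by (auto simp: dist_real_def)
    qed
  qed
  show ?thesis
  proof (intro exI conjI allI impI)
    show "0 < min (b1 - t) (t - b2)" using b1 b2 by auto
    fix s :: real assume "0 \<le> s" "\<bar>s - t\<bar> < min (b1 - t) (t - b2)"
    then have "s = t \<or> (t < s \<and> s < b1) \<or> (b2 < s \<and> s < t)" by auto
    then show "\<bar>p s\<bar> \<le> max (\<bar>p t\<bar> + 1) B2"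
      using b1(2)[of s] b2(2)[of s] \<open>0 \<le> s\<close> by (auto simp: dist_real_def)
  qed
qed

lemma cadlag_bounded:
  assumes c: "cadlag p" and T: "0 \<le> T"
  shows "\<exists>B. \<forall>s\<in>{0..T}. \<bar>p s\<bar> \<le> B"
proof -
  have "\<forall>t\<in>{0..T}. \<exists>d. d > 0 \<and> (\<exists>B. \<forall>s\<ge>0. \<bar>s - t\<bar> < d \<longrightarrow> \<bar>p s\<bar> \<le> B)"
    using cadlag_local_bound[OF c] by auto
  then obtain d where d: "\<And>t. t \<in> {0..T} \<Longrightarrow> d t > 0 \<and> (\<exists>B. \<forall>s\<ge>0. \<bar>s - t\<bar> < d t \<longrightarrow> \<bar>p s\<bar> \<le> B)"
    by metis
  then obtain B where B: "\<And>t s. t \<in> {0..T} \<Longrightarrow> s \<ge> 0 \<Longrightarrow> \<bar>s - t\<bar> < d t \<Longrightarrow> \<bar>p s\<bar> \<le> B t"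
    by metis
  have "{0..T} \<subseteq> (\<Union>t\<in>{0..T}. ball t (d t))" using d by force
  then obtain C where C: "C \<subseteq> {0..T}" "finite C" "{0..T} \<subseteq> (\<Union>t\<in>C. ball t (d t))"
    using compactE_image[of "{0..T}" "{0..T}" "\<lambda>t. ball t (d t)"] by auto
  show ?thesis
  proof (intro exI ballI)
    fix s assume s: "s \<in> {0..T}"
    then obtain t where t: "t \<in> C" "s \<in> ball t (d t)" using C by auto
    then have "\<bar>p s\<bar> \<le> B t" using B[of t s] C s by (auto simp: dist_real_def)
    also have "B t \<le> Max (B ` C)" using t C by (auto intro!: Max_ge)
    finally show "\<bar>p s\<bar> \<le> Max (B ` C)" .
  qed
qed

lemma Sup_bounds:
  assumes c: "cadlag p" and t: "0 \<le> t" and u: "u \<in> {0..t}"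
  shows "bdd_above (p ` {0..t})" "p u \<le> Sup (p ` {0..t})"
proof -
  obtain B where B: "\<forall>s\<in>{0..t}. \<bar>p s\<bar> \<le> B" using cadlag_bounded[OF c t] by blast
  show b: "bdd_above (p ` {0..t})" using B by (auto intro!: bdd_aboveI[of _ B])
  show "p u \<le> Sup (p ` {0..t})" using u by (intro cSup_upper b) auto
qed

lemma Sup_right_cont:
  assumes c: "cadlag p" and t: "0 \<le> t"
  shows "((\<lambda>s. Sup (p ` {0..s})) \<longlongrightarrow> Sup (p ` {0..t})) (at_right t)"
proof (rule tendstoI)
  fix e :: real assume e: "0 < e"
  have "(p \<longlongrightarrow> p t) (at_right t)" using c t by (auto simp: cadlag_def continuous_within)
  then have "eventually (\<lambda>s. dist (p s) (p t) < e/2) (at_right t)"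
    by (rule tendstoD) (use e in simp)
  then obtain b where b: "b > t" "\<And>y. t < y \<Longrightarrow> y < b \<Longrightarrow> dist (p y) (p t) < e/2"
    using ev_right by blast
  have "eventually (\<lambda>s. s \<in> {t<..<b}) (at_right t)" by (rule eventually_at_right_real) fact
  then show "eventually (\<lambda>s. dist (Sup (p ` {0..s})) (Sup (p ` {0..t})) < e) (at_right t)"
  proof eventually_elim
    case (elim s)
    then have s: "t < s" "s < b" by auto
    have bs: "bdd_above (p ` {0..s})" using Sup_bounds[OF c, of s 0] s t by auto
    have le1: "Sup (p ` {0..t}) \<le> Sup (p ` {0..s})"
      using s t by (intro cSup_subset_mono bs) auto
    have le2: "Sup (p ` {0..s}) \<le> Sup (p ` {0..t}) + e/2"
    proof (rule cSup_least)
      show "p ` {0..s} \<noteq> {}" using s t by auto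
      fix x assume "x \<in> p ` {0..s}"
      then obtain u where u: "u \<in> {0..s}" "x = p u" by auto
      show "x \<le> Sup (p ` {0..t}) + e / 2"
      proof (cases "u \<le> t")
        case True then show ?thesis using Sup_bounds(2)[OF c t, of u] u e by auto
      next
        case False
        then have "dist (p u) (p t) < e/2" using b(2)[of u] u s by auto
        then have "p u < p t + e/2" using abs_ge_self[of "p u - p t"] unfolding dist_real_def by linarith
        then show ?thesis using Sup_bounds(2)[OF c t, of t] u t by auto
      qed
    qed
    show ?case using le1 le2 e by (auto simp: dist_real_def)
  qed
qed

lemma Rp_right_cont:
  assumes c: "cadlag p" and t: "0 \<le> t"
  shows "continuous (at_right t) (Rp p)"
proof -
  have "continuous (at_right t) (\<lambda>s. Sup (p ` {0..s}))"
    using Sup_right_cont[OF c t] by (simp add: continuous_within)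
  moreover have "continuous (at_right t) p" using c t by (auto simp: cadlag_def)
  ultimately show ?thesis unfolding Rp_def[abs_def] by (intro continuous_intros)
qed

lemma Rp_bounded:
  assumes c: "cadlag p" and T: "0 \<le> T"
  shows "\<exists>B. \<forall>s\<in>{0..T}. Rp p s \<le> B"
proof -
  obtain B where B: "\<forall>s\<in>{0..T}. \<bar>p s\<bar> \<le> B" using cadlag_bounded[OF c T] by blast
  show ?thesis
  proof (intro exI ballI)
    fix s assume s: "s \<in> {0..T}"
    have B': "\<forall>u\<in>{0..s}. p u \<le> B" using s B by force
    have "Sup (p ` {0..s}) \<le> B"
      using s B' by (intro cSup_least) auto
    moreover have "\<bar>p s\<bar> \<le> B" using B s by auto
    ultimately show "Rp p s \<le> \<bar>B\<bar> + B" by (auto simp: Rp_def)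
  qed
qed

lemma kp_mono: "b \<le> b' \<Longrightarrow> kp p b \<le> kp p b'"
  unfolding kp_def by (intro Inf_superset_mono) auto

lemma kp_nonneg: "0 \<le> kp p b"
  unfolding kp_def by (intro Inf_greatest) auto

lemma kp_before: "0 \<le> t \<Longrightarrow> ereal t < kp p b \<Longrightarrow> Rp p t \<le> b"
proof (rule ccontr)
  assume "0 \<le> t" "ereal t < kp p b" "\<not> Rp p t \<le> b"
  then have "kp p b \<le> ereal t" unfolding kp_def by (intro Inf_lower) auto
  then show False using \<open>ereal t < kp p b\<close> by auto
qed

lemma kp_at_top:
  assumes c: "cadlag p" and t: "0 \<le> t"
  shows "eventually (\<lambda>b. ereal t < kp p b) at_top"
proof -
  obtain B where B: "\<forall>s\<in>{0..t+1}. Rp p s \<le> B" using Rp_bounded[OF c, of "t+1"] t by auto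
  have "eventually (\<lambda>b. B < b) at_top" by (rule eventually_gt_at_top)
  then show ?thesis
  proof eventually_elim
    case (elim b)
    have "ereal (t+1) \<le> kp p b" unfolding kp_def
    proof (rule Inf_greatest)
      fix x assume "x \<in> ereal ` {t. 0 \<le> t \<and> b < Rp p t}"
      then obtain u where "x = ereal u" "0 \<le> u" "b < Rp p u" by auto
      show "ereal (t+1) \<le> x"
      proof (cases "u \<le> t+1")
        case True
        then have "Rp p u \<le> B" using B \<open>0 \<le> u\<close> by auto
        then show ?thesis using elim \<open>b < Rp p u\<close> by auto
      qed (use \<open>x = ereal u\<close> in auto)
    qed
    then show ?case by (rule less_le_trans[rotated]) simp
  qed
qed

lemma kp_rat:
  assumes c: "cadlag p"
  shows "kp p b = (INF q\<in>{q. q \<in> \<rat> \<and> 0 \<le> q}. if b < Rp p q then ereal q else \<infinity>)"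
proof (rule antisym)
  show "kp p b \<le> (INF q\<in>{q. q \<in> \<rat> \<and> 0 \<le> q}. if b < Rp p q then ereal q else \<infinity>)"
    unfolding kp_def by (intro INF_greatest) (auto intro: Inf_lower)
  show "(INF q\<in>{q. q \<in> \<rat> \<and> 0 \<le> q}. if b < Rp p q then ereal q else \<infinity>) \<le> kp p b"
    unfolding kp_def
  proof (rule Inf_greatest)
    fix x assume "x \<in> ereal ` {t. 0 \<le> t \<and> b < Rp p t}"
    then obtain t where x: "x = ereal t" and t: "0 \<le> t" "b < Rp p t" by auto
    let ?I = "(INF q\<in>{q. q \<in> \<rat> \<and> 0 \<le> q}. if b < Rp p q then ereal q else \<infinity>)"
    show "?I \<le> x"
    proof (rule ccontr)
      assume "\<not> ?I \<le> x"
      then have "ereal t < ?I" using x by auto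
      then obtain y where y: "ereal t < ereal y" "ereal y < ?I"
        using ereal_dense2 by blast
      have "(Rp p \<longlongrightarrow> Rp p t) (at_right t)" using Rp_right_cont[OF c t(1)] by (simp add: continuous_within)
      then have "eventually (\<lambda>s. b < Rp p s) (at_right t)"
        using t(2) by (rule order_tendstoD)
      then obtain d where d: "d > t" "\<And>s. t < s \<Longrightarrow> s < d \<Longrightarrow> b < Rp p s"
        using ev_right by blast
      have "t < min d y" using d y by auto
      then obtain q where q: "q \<in> \<rat>" "t < q" "q < min d y" using Rats_dense_in_real by blast
      then have "?I \<le> (if b < Rp p q then ereal q else \<infinity>)" using t by (intro INF_lower) auto
      also have "\<dots> = ereal q" using d(2)[of q] q by auto
      finally have I1: "?I \<le> ereal q" .
      from y(2) I1 have "ereal y < ereal q" by (rule less_le_trans)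
      then show False using q by simp
    qed
  qed
qed

lemma Sup_rat:
  assumes c: "cadlag p" and t: "0 \<le> t"
  shows "Sup (p ` {0..t}) = (SUP s\<in>{s. s \<in> \<rat> \<and> 0 \<le> s \<and> s \<le> t} \<union> {t}. p s)"
proof -
  let ?D = "{s. s \<in> \<rat> \<and> 0 \<le> s \<and> s \<le> t} \<union> {t}"
  have bD: "bdd_above (p ` ?D)"
  proof -
    have b0: "bdd_above (p ` {0..t})" using Sup_bounds(1)[OF c t, of t] t by auto
    show ?thesis by (rule bdd_above_mono[OF b0]) (use t in auto)
  qed
  show ?thesis
  proof (rule antisym)
    show "Sup (p ` {0..t}) \<le> (SUP s\<in>?D. p s)"
    proof (rule cSup_least)
      show "p ` {0..t} \<noteq> {}" using t by auto
      fix x assume "x \<in> p ` {0..t}"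
      then obtain u where u: "u \<in> {0..t}" "x = p u" by auto
      show "x \<le> (SUP s\<in>?D. p s)"
      proof (cases "u = t")
        case True
        have "p t \<le> (SUP s\<in>?D. p s)" by (rule cSUP_upper[OF _ bD]) auto
        then show ?thesis using u True by auto
      next
        case False
        show ?thesis
        proof (rule ccontr)
          assume "\<not> x \<le> (SUP s\<in>?D. p s)"
          then have lt: "(SUP s\<in>?D. p s) < p u" using u by auto
          have "(p \<longlongrightarrow> p u) (at_right u)" using c u by (auto simp: cadlag_def continuous_within)
          then have "eventually (\<lambda>s. (SUP s\<in>?D. p s) < p s) (at_right u)"
            using lt by (rule order_tendstoD)
          then obtain d where d: "d > u" "\<And>s. u < s \<Longrightarrow> s < d \<Longrightarrow> (SUP s\<in>?D. p s) < p s"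
            using ev_right by blast
          have "u < min d t" using d u False by auto
          then obtain q where q: "q \<in> \<rat>" "u < q" "q < min d t" using Rats_dense_in_real by blast
          then have "p q \<le> (SUP s\<in>?D. p s)" using u by (intro cSUP_upper bD) auto
          then show False using d(2)[of q] q by auto
        qed
      qed
    qed
    show "(SUP s\<in>?D. p s) \<le> Sup (p ` {0..t})"
    proof (rule cSUP_least)
      show "?D \<noteq> {}" by auto
      fix x assume "x \<in> ?D"
      then show "p x \<le> Sup (p ` {0..t})" using t by (intro Sup_bounds(2)[OF c t]) auto
    qed
  qed
qed



locale cadproc =
  fixes M :: "'a measure" and X :: "real \<Rightarrow> 'a \<Rightarrow> real"
  assumes meas: "\<And>t. 0 \<le> t \<Longrightarrow> X t \<in> borel_measurable M"
    and cad: "\<And>\<omega>. \<omega> \<in> space M \<Longrightarrow> cadlag (\<lambda>s. X s \<omega>)"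
begin

lemma R_meas:
  assumes t: "0 \<le> t"
  shows "(\<lambda>\<omega>. Rp (\<lambda>s. X s \<omega>) t) \<in> borel_measurable M"
proof -
  let ?D = "{s. s \<in> \<rat> \<and> 0 \<le> s \<and> s \<le> t} \<union> {t}"
  have cD: "countable ?D"
    by (rule countable_Un[OF countable_subset[OF _ countable_rat]]) auto
  have "(\<lambda>\<omega>. SUP s\<in>?D. X s \<omega>) \<in> borel_measurable M"
  proof (rule borel_measurable_cSUP[OF cD])
    fix s assume "s \<in> ?D" then show "X s \<in> borel_measurable M" using t by (intro meas) auto
  next
    fix \<omega> assume w: "\<omega> \<in> space M"
    have b0: "bdd_above ((\<lambda>s. X s \<omega>) ` {0..t})" using Sup_bounds(1)[OF cad[OF w] t, of t] t by auto
    show "bdd_above ((\<lambda>s. X s \<omega>) ` ?D)" by (rule bdd_above_mono[OF b0]) (use t in auto)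
  qed
  moreover have "X t \<in> borel_measurable M" using meas t .
  ultimately have "(\<lambda>\<omega>. max (SUP s\<in>?D. X s \<omega>) 0 - X t \<omega>) \<in> borel_measurable M"
    by measurable
  moreover have "\<omega> \<in> space M \<Longrightarrow> max (SUP s\<in>?D. X s \<omega>) 0 - X t \<omega> = Rp (\<lambda>s. X s \<omega>) t" for \<omega>
    unfolding Rp_def using Sup_rat[OF cad t] by simp
  ultimately show ?thesis by (rule measurable_cong[THEN iffD1, rotated]) 
qed

lemma k_meas: "(\<lambda>\<omega>. kp (\<lambda>s. X s \<omega>) b) \<in> borel_measurable M"
proof -
  let ?I = "{q. q \<in> \<rat> \<and> 0 \<le> q}"
  have cI: "countable ?I" by (rule countable_subset[OF _ countable_rat]) auto
  have "(\<lambda>\<omega>. INF q\<in>?I. if b < Rp (\<lambda>s. X s \<omega>) q then ereal q else \<infinity>) \<in> borel_measurable M"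
  proof (rule borel_measurable_INF[OF cI])
    fix q :: real assume "q \<in> ?I"
    then have [measurable]: "(\<lambda>\<omega>. Rp (\<lambda>s. X s \<omega>) q) \<in> borel_measurable M" by (intro R_meas) auto
    show "(\<lambda>\<omega>. if b < Rp (\<lambda>s. X s \<omega>) q then ereal q else \<infinity>) \<in> borel_measurable M"
      by measurable
  qed
  moreover have "\<omega> \<in> space M \<Longrightarrow> (INF q\<in>?I. if b < Rp (\<lambda>s. X s \<omega>) q then ereal q else \<infinity>) = kp (\<lambda>s. X s \<omega>) b" for \<omega>
    using kp_rat[OF cad] by simp
  ultimately show ?thesis by (rule measurable_cong[THEN iffD1, rotated]) 
qed

lemma R_joint:
  "(\<lambda>z. Rp (\<lambda>s. X s (fst z)) (max (snd z) 0)) \<in> borel_measurable (M \<Otimes>\<^sub>M (lborel::real measure))"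
proof (rule borel_measurable_LIMSEQ_real)
  let ?A = "\<lambda>n z. Rp (\<lambda>s. X s (fst z)) (max 0 (real_of_int \<lceil>(2::real)^n * max (snd z) 0\<rceil> / 2^n))"
  show "?A n \<in> borel_measurable (M \<Otimes>\<^sub>M (lborel::real measure))" for n
  proof (rule measurable_compose_countable[where f = "\<lambda>k z. Rp (\<lambda>s. X s (fst z)) (max 0 (real_of_int k / 2^n))"
        and g = "\<lambda>z. \<lceil>(2::real)^n * max (snd z) 0\<rceil>"])
    fix k :: int
    show "(\<lambda>z. Rp (\<lambda>s. X s (fst z)) (max 0 (real_of_int k / 2^n))) \<in> borel_measurable (M \<Otimes>\<^sub>M (lborel::real measure))"
      by (rule measurable_compose[OF measurable_fst R_meas]) auto
  next
    have "(\<lambda>z. 2^n * max (snd z) 0 :: real) \<in> borel_measurable (M \<Otimes>\<^sub>M (lborel::real measure))" by measurable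
    then show "(\<lambda>z. \<lceil>(2::real)^n * max (snd z) 0\<rceil>) \<in> measurable (M \<Otimes>\<^sub>M (lborel::real measure)) (count_space UNIV)"
      by (rule measurable_compose[OF _ measurable_real_ceiling])
  qed
  fix z :: "'a \<times> real" assume z: "z \<in> space (M \<Otimes>\<^sub>M (lborel::real measure))"
  then have w: "fst z \<in> space M" by (auto simp: space_pair_measure)
  define u where "u = max (snd z) 0"
  have u: "0 \<le> u" by (simp add: u_def)
  define un where "un n = real_of_int \<lceil>2^n * u\<rceil> / 2^n" for n :: nat
  have un1: "u \<le> un n" for n
    using le_of_int_ceiling[of "2^n * u"] by (simp add: un_def field_simps)
  have un2: "un n \<le> u + inverse (2^n)" for n
    using of_int_ceiling_le_add_one[of "2^n * u"] by (simp add: un_def field_simps)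
  have "un \<longlonglongrightarrow> u"
  proof (rule tendsto_sandwich[of "\<lambda>n. u" _ _ "\<lambda>n. u + inverse (2^n)"])
    show "\<forall>\<^sub>F n in sequentially. u \<le> un n" using un1 by auto
    show "\<forall>\<^sub>F n in sequentially. un n \<le> u + inverse (2^n)" using un2 by auto
    show "(\<lambda>n. u + inverse (2 ^ n)) \<longlonglongrightarrow> u"
      using tendsto_add[OF tendsto_const LIMSEQ_inverse_realpow_zero[of 2]] by simp
  qed simp
  have "continuous (at u within {u..}) (Rp (\<lambda>s. X s (fst z)))"
    using Rp_right_cont[OF cad[OF w] u] by (simp add: at_within_Ici_at_right)
  then have "(\<lambda>n. Rp (\<lambda>s. X s (fst z)) (un n)) \<longlonglongrightarrow> Rp (\<lambda>s. X s (fst z)) u"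
    using \<open>un \<longlonglongrightarrow> u\<close> un1 unfolding continuous_within_sequentially by (auto simp: comp_def)
  moreover have "max 0 (real_of_int \<lceil>(2::real)^n * max (snd z) 0\<rceil> / 2^n) = un n" for n
    using un1[of n] u by (auto simp: un_def u_def)
  ultimately show "(\<lambda>n. ?A n z) \<longlonglongrightarrow> Rp (\<lambda>s. X s (fst z)) (max (snd z) 0)"
    by (simp add: u_def)
qed

end


theorem lemma2p8:
  fixes M :: "'a measure" and X :: "real \<Rightarrow> 'a \<Rightarrow> real"
    and q r \<alpha> \<beta> Linf :: real and w :: "real \<Rightarrow> real"
  assumes levy: "levy_process M X"
    and int1: "integrable M (X 1)"
    and not_cpp: "\<not> driftless_compound_poisson M X"
    and q: "q > 0" and r: "r > 0" and alpha: "\<alpha> = q + r" and beta: "\<beta> > 1"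
    and w_mono: "mono_on {0..} w"
    and w_cont: "continuous_on {0..} w"
    and w_conc: "concave_on {0..} w"
    and w0: "\<exists>d. ((\<lambda>h. (w h - w 0) / h) \<longlongrightarrow> d) (at_right 0) \<and> d \<le> \<beta> * \<alpha> / r"
    and winf: "(rderiv w \<longlongrightarrow> Linf) at_top"
    and Linf: "0 \<le> Linf" "Linf < \<alpha> / r"
  shows "antimono_on {0..} (gfun M X \<alpha> \<beta> r w)
       \<and> (gfun M X \<alpha> \<beta> r w \<longlongrightarrow> r / \<alpha> * Linf) at_top
       \<and> r / \<alpha> * Linf < 1"
proof -
  have ps: "prob_space M" and meas: "\<And>t. 0 \<le> t \<Longrightarrow> X t \<in> borel_measurable M"
    and cad: "\<And>\<omega>. \<omega> \<in> space M \<Longrightarrow> cadlag (\<lambda>s. X s \<omega>)"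
    using levy unfolding levy_process_def cadlag_def by auto
  interpret prob_space M by (rule ps)
  interpret cp: cadproc M X by unfold_locales (auto intro: meas cad)
  have a: "\<alpha> > 0" using alpha q r by simp
  obtain d where d: "((\<lambda>h. (w h - w 0) / h) \<longlongrightarrow> d) (at_right 0)" "d \<le> \<beta> * \<alpha> / r"
    using w0 by blast
  have rd0: "rderiv w 0 = d" using d(1) unfolding rderiv_def by (simp add: tendsto_Lim)
  have rdt: "((\<lambda>h. (w (x + h) - w x) / h) \<longlongrightarrow> rderiv w x) (at_right 0)" if "0 \<le> x" for x
  proof (cases "x = 0")
    case True then show ?thesis using d(1) rd0 by simp
  next
    case False then show ?thesis using rderiv_exists[OF w_conc] that by auto
  qed
  have rdanti: "rderiv w y \<le> rderiv w x" if "0 \<le> x" "x \<le> y" for x y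
  proof (cases "x = y")
    case False then show ?thesis using rderiv_le[OF w_conc that(1) _ rdt rdt] that by auto
  qed simp
  have rdr: "r * d \<le> \<alpha> * \<beta>" using d(2) r by (simp add: field_simps)
  define W where "W x = rderiv w (max x 0)" for x
  have W_anti: "W y \<le> W x" if "x \<le> y" for x y unfolding W_def using that by (intro rdanti) auto
  have W_lim: "(W \<longlongrightarrow> Linf) at_top"
  proof (rule Lim_transform_eventually[OF winf])
    show "eventually (\<lambda>x. rderiv w x = W x) at_top"
      using eventually_ge_at_top[of 0] by eventually_elim (auto simp: W_def)
  qed
  have W_lb: "Linf \<le> W x" for x
  proof (rule tendsto_upperbound[OF W_lim])
    show "\<forall>\<^sub>F i in at_top. W i \<le> W x"
      using eventually_ge_at_top[of x] by eventually_elim (rule W_anti)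
  qed simp
  have W_ub: "W x \<le> d" for x
    using W_anti[of 0 "max x 0"] rd0 by (auto simp: W_def max_def split: if_splits)
  have W_meas[measurable]: "W \<in> borel_measurable borel"
  proof -
    have "mono (\<lambda>x. - W x)" by (auto intro!: monoI W_anti)
    then have "(\<lambda>x. - W x) \<in> borel_measurable borel" by (rule borel_measurable_mono)
    then have "(\<lambda>x. - (- W x)) \<in> borel_measurable borel" by measurable
    then show ?thesis by simp
  qed
  define K where "K = r * max \<bar>d\<bar> \<bar>Linf\<bar> + \<alpha> * \<beta>"
  have K: "0 \<le> K" using a beta r by (auto simp: K_def)
  have WK: "\<bar>r * W x - \<alpha> * \<beta>\<bar> \<le> K" for x
  proof -
    have "\<bar>W x\<bar> \<le> max \<bar>d\<bar> \<bar>Linf\<bar>" using W_lb[of x] W_ub[of x] by auto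
    then have h1: "r * \<bar>W x\<bar> \<le> r * max \<bar>d\<bar> \<bar>Linf\<bar>" using r by (intro mult_left_mono) auto
    have h2: "\<bar>r * W x - \<alpha> * \<beta>\<bar> \<le> \<bar>r * W x\<bar> + \<bar>\<alpha> * \<beta>\<bar>" by (rule abs_triangle_ineq4)
    have h3: "\<bar>r * W x\<bar> = r * \<bar>W x\<bar>" "\<bar>\<alpha> * \<beta>\<bar> = \<alpha> * \<beta>" using a beta r by (auto simp: abs_mult)
    show ?thesis using h1 h2 h3 by (simp add: K_def)
  qed
  define R where "R \<omega> t = Rp (\<lambda>s. X s \<omega>) t" for \<omega> t
  define \<kappa> where "\<kappa> b \<omega> = kp (\<lambda>s. X s \<omega>) b" for b \<omega>
  have reflX: "reflected X b b \<omega> t = b - R \<omega> t" for b \<omega> t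
    unfolding reflected_def R_def Rp_def by simp
  have fb: "first_below (reflected X b b \<omega>) 0 = \<kappa> b \<omega>" for b \<omega>
    unfolding first_below_def \<kappa>_def kp_def reflX R_def by (rule arg_cong[where f = Inf]) auto
  define E where "E t = indicator {t. 0 \<le> t \<and> ereal t < \<infinity>} t * exp(-\<alpha>*t)" for t :: real
  have E_int: "integrable lborel E" and E_val: "integral\<^sup>L lborel E = 1/\<alpha>"
    using exp_ind_int[OF a, of \<infinity>] by (auto simp: E_def[abs_def] disc_def)
  have E_nn: "0 \<le> E t" for t by (auto simp: E_def)
  define F where "F b \<omega> t = indicator {t. 0 \<le> t \<and> ereal t < \<kappa> b \<omega>} t * exp(-\<alpha>*t) * (r * W (b - R \<omega> (max t 0)) - \<alpha>*\<beta>)" for b \<omega> t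
  have F_joint: "(\<lambda>z. F b (fst z) (snd z)) \<in> borel_measurable (M \<Otimes>\<^sub>M (lborel::real measure))" for b
  proof -
    have [measurable]: "(\<lambda>z. kp (\<lambda>s. X s (fst z)) b) \<in> borel_measurable (M \<Otimes>\<^sub>M (lborel::real measure))"
      by (rule measurable_compose[OF measurable_fst cp.k_meas])
    note [measurable] = cp.R_joint
    show ?thesis unfolding F_def R_def \<kappa>_def by measurable
  qed

  have F_sec: "F b \<omega> \<in> borel_measurable lborel" if "\<omega> \<in> space M" for b \<omega>
    using measurable_Pair2[OF F_joint that] by simp
  have F_bound: "\<bar>F b \<omega> t\<bar> \<le> K * E t" for b \<omega> t
  proof (cases "0 \<le> t \<and> ereal t < \<kappa> b \<omega>")
    case True
    then have "\<bar>F b \<omega> t\<bar> = exp(-\<alpha>*t) * \<bar>r * W (b - R \<omega> (max t 0)) - \<alpha>*\<beta>\<bar>"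
      by (simp add: F_def abs_mult)
    also have "\<dots> \<le> exp(-\<alpha>*t) * K" by (intro mult_left_mono WK) auto
    finally show ?thesis using True by (simp add: E_def mult.commute)
  next
    case False then show ?thesis using K E_nn by (simp add: F_def)
  qed
  have KE_int: "integrable lborel (\<lambda>t. K * E t)" using E_int by simp
  have F_int: "integrable lborel (F b \<omega>)" if "\<omega> \<in> space M" for b \<omega>
  proof (rule Bochner_Integration.integrable_bound[OF KE_int F_sec[OF that]])
    show "AE t in lborel. norm (F b \<omega> t) \<le> norm (K * E t)"
      using F_bound K E_nn by (intro AE_I2) (auto simp: abs_mult)
  qed
  define G where "G b \<omega> = \<beta> + (\<integral>t. F b \<omega> t \<partial>lborel)" for b \<omega>
  have G_meas: "G b \<in> borel_measurable M" for b
  proof -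
    have "(\<lambda>(\<omega>, t). F b \<omega> t) \<in> borel_measurable (M \<Otimes>\<^sub>M (lborel::real measure))"
      using F_joint[of b] by (simp add: split_beta')
    then have "(\<lambda>\<omega>. \<integral>t. F b \<omega> t \<partial>lborel) \<in> borel_measurable M"
      by (rule lborel.borel_measurable_lebesgue_integral)
    then show ?thesis unfolding G_def by measurable
  qed
  have G_bound: "\<bar>G b \<omega>\<bar> \<le> \<beta> + K/\<alpha>" if "\<omega> \<in> space M" for b \<omega>
  proof -
    have "norm (\<integral>t. F b \<omega> t \<partial>lborel) \<le> (\<integral>t. K * E t \<partial>lborel)"
      by (rule Bochner_Integration.integral_norm_bound_integral[OF F_int[OF that] KE_int]) (use F_bound in auto)
    also have "\<dots> = K / \<alpha>" using E_val by simp
    finally show ?thesis using beta by (simp add: G_def)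
  qed
  have G_int: "integrable M (G b)" for b
  proof (rule integrable_const_bound[OF _ G_meas])
    show "AE x in M. norm (G b x) \<le> \<beta> + K/\<alpha>"
      using AE_space by eventually_elim (use G_bound in auto)
  qed
  define D where "D b \<omega> = disc \<alpha> (first_below (reflected X b b \<omega>) 0)" for b \<omega>
  define I where "I b \<omega> = (\<integral>t. indicator {t. 0 \<le> t \<and> ereal t < first_below (reflected X b b \<omega>) 0} t
                        * exp (- \<alpha> * t) * rderiv w (reflected X b b \<omega> t) \<partial>lborel)" for b \<omega>
  have pw: "\<beta> * D b \<omega> + r * I b \<omega> = G b \<omega>" if \<omega>: "\<omega> \<in> space M" for b \<omega>
    unfolding D_def I_def
  proof -
    let ?ie = "\<lambda>t. indicator {t. 0 \<le> t \<and> ereal t < \<kappa> b \<omega>} t * exp(-\<alpha>*t)"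
    have k0: "0 \<le> \<kappa> b \<omega>" by (simp add: \<kappa>_def kp_nonneg)
    have eq1: "(\<integral>t. indicator {t. 0 \<le> t \<and> ereal t < first_below (reflected X b b \<omega>) 0} t
                        * exp (- \<alpha> * t) * rderiv w (reflected X b b \<omega> t) \<partial>lborel)
       = (\<integral>t. (1/r) * (F b \<omega> t + \<alpha> * \<beta> * ?ie t) \<partial>lborel)"
    proof (rule Bochner_Integration.integral_cong[OF refl])
      fix t :: real
      show "indicator {t. 0 \<le> t \<and> ereal t < first_below (reflected X b b \<omega>) 0} t
                        * exp (- \<alpha> * t) * rderiv w (reflected X b b \<omega> t)
            = (1/r) * (F b \<omega> t + \<alpha> * \<beta> * ?ie t)"
      proof (cases "0 \<le> t \<and> ereal t < \<kappa> b \<omega>")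
        case True
        then have "R \<omega> t \<le> b" unfolding R_def \<kappa>_def by (intro kp_before) auto
        then have "W (b - R \<omega> (max t 0)) = rderiv w (b - R \<omega> t)" using True by (simp add: W_def)
        then show ?thesis using True r by (simp add: F_def fb reflX field_simps)
      next
        case False then show ?thesis by (simp add: F_def fb)
      qed
    qed
    have ie_int: "integrable lborel ?ie" and ie_val: "integral\<^sup>L lborel ?ie = (1 - disc \<alpha> (\<kappa> b \<omega>))/\<alpha>"
      using exp_ind_int[OF a k0] by auto
    have eq2: "(\<integral>t. (1/r) * (F b \<omega> t + \<alpha> * \<beta> * ?ie t) \<partial>lborel)
        = (1/r) * ((\<integral>t. F b \<omega> t \<partial>lborel) + \<alpha> * \<beta> * ((1 - disc \<alpha> (\<kappa> b \<omega>))/\<alpha>))"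
      using F_int[OF \<omega>, of b] ie_int ie_val by simp
    show "\<beta> * disc \<alpha> (first_below (reflected X b b \<omega>) 0) +
          r * (\<integral>t. indicator {t. 0 \<le> t \<and> ereal t < first_below (reflected X b b \<omega>) 0} t
                        * exp (- \<alpha> * t) * rderiv w (reflected X b b \<omega> t) \<partial>lborel) = G b \<omega>"
      unfolding eq1 unfolding eq2 unfolding fb using r a by (simp add: G_def field_simps)
  qed
  have D_meas: "D b \<in> borel_measurable M" for b
  proof -
    have [measurable]: "(\<lambda>\<omega>. kp (\<lambda>s. X s \<omega>) b) \<in> borel_measurable M" by (rule cp.k_meas)
    show ?thesis unfolding D_def fb \<kappa>_def disc_def by measurable
  qed
  have D_bound: "\<bar>D b \<omega>\<bar> \<le> 1" for b \<omega>
  proof -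
    have k0: "0 \<le> \<kappa> b \<omega>" by (simp add: \<kappa>_def kp_nonneg)
    then have "0 \<le> real_of_ereal (\<kappa> b \<omega>)" by (simp add: real_of_ereal_pos)
    then have "exp (- \<alpha> * real_of_ereal (\<kappa> b \<omega>)) \<le> 1" using a by (simp add: mult_nonneg_nonneg)
    then show ?thesis by (simp add: D_def fb disc_def)
  qed
  have D_int: "integrable M (D b)" for b
    by (rule integrable_const_bound[OF _ D_meas]) (use D_bound in auto)
  have gfun_eq: "gfun M X \<alpha> \<beta> r w b = integral\<^sup>L M (G b)" for b
  proof -
    have g1: "gfun M X \<alpha> \<beta> r w b = \<beta> * integral\<^sup>L M (D b) + r * integral\<^sup>L M (I b)"
      by (simp add: gfun_def D_def[abs_def] I_def[abs_def])
    have "integral\<^sup>L M (I b) = integral\<^sup>L M (\<lambda>\<omega>. (G b \<omega> - \<beta> * D b \<omega>) / r)"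
    proof (rule Bochner_Integration.integral_cong[OF refl])
      fix \<omega> assume "\<omega> \<in> space M"
      then show "I b \<omega> = (G b \<omega> - \<beta> * D b \<omega>) / r" using pw[of \<omega> b] r by (simp add: field_simps)
    qed
    also have "\<dots> = (integral\<^sup>L M (G b) - \<beta> * integral\<^sup>L M (D b)) / r"
      using G_int[of b] D_int[of b] by simp
    finally show ?thesis using g1 r by (simp add: field_simps)
  qed
  have G_mono: "G b' \<omega> \<le> G b \<omega>" if bb: "b \<le> b'" and \<omega>: "\<omega> \<in> space M" for b b' \<omega>
  proof -
    have kk: "\<kappa> b \<omega> \<le> \<kappa> b' \<omega>" unfolding \<kappa>_def using bb by (rule kp_mono)
    have "(\<integral>t. F b' \<omega> t \<partial>lborel) \<le> (\<integral>t. F b \<omega> t \<partial>lborel)"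
    proof (rule integral_mono[OF F_int[OF \<omega>] F_int[OF \<omega>]])
      fix t :: real
      show "F b' \<omega> t \<le> F b \<omega> t"
      proof (cases "0 \<le> t \<and> ereal t < \<kappa> b' \<omega>")
        case False
        then have "\<not> (0 \<le> t \<and> ereal t < \<kappa> b \<omega>)" using kk by auto
        then show ?thesis using False by (simp add: F_def)
      next
        case True
        show ?thesis
        proof (cases "ereal t < \<kappa> b \<omega>")
          case True2: True
          have "W (b' - R \<omega> (max t 0)) \<le> W (b - R \<omega> (max t 0))" using bb by (intro W_anti) auto
          then have "r * W (b' - R \<omega> (max t 0)) - \<alpha>*\<beta> \<le> r * W (b - R \<omega> (max t 0)) - \<alpha>*\<beta>"
            using r by simp
          then show ?thesis using True True2 by (simp add: F_def)
        next
          case False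
          have "r * W (b' - R \<omega> (max t 0)) \<le> r * d" using r W_ub by (intro mult_left_mono) auto
          then have "r * W (b' - R \<omega> (max t 0)) - \<alpha>*\<beta> \<le> 0" using rdr by simp
          then have "exp(-\<alpha>*t) * (r * W (b' - R \<omega> (max t 0)) - \<alpha>*\<beta>) \<le> 0"
            by (simp add: mult_nonneg_nonpos)
          then show ?thesis using True False by (simp add: F_def)
        qed
      qed
    qed
    then show ?thesis by (simp add: G_def)
  qed
  have part1: "antimono_on {0..} (gfun M X \<alpha> \<beta> r w)"
  proof (rule monotone_onI)
    fix b b' :: real assume "b \<in> {0..}" "b' \<in> {0..}" "b \<le> b'"
    then show "gfun M X \<alpha> \<beta> r w b' \<le> gfun M X \<alpha> \<beta> r w b"
      unfolding gfun_eq by (intro integral_mono[OF G_int G_int] G_mono) auto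
  qed
  define \<Phi> where "\<Phi> t = E t * (r * Linf - \<alpha> * \<beta>)" for t
  have G_lim: "((\<lambda>b. G b \<omega>) \<longlongrightarrow> r / \<alpha> * Linf) at_top" if \<omega>: "\<omega> \<in> space M" for \<omega>
  proof -
    have E_meas: "E \<in> borel_measurable lborel" using E_int by (rule borel_measurable_integrable)
    have lim: "((\<lambda>b. \<integral>t. F b \<omega> t \<partial>lborel) \<longlongrightarrow> integral\<^sup>L lborel \<Phi>) at_top"
    proof (rule integral_dominated_convergence_at_top[where w = "\<lambda>t. K * E t"])
      show "\<Phi> \<in> borel_measurable lborel" unfolding \<Phi>_def using E_meas by measurable
      show "F b \<omega> \<in> borel_measurable lborel" for b by (rule F_sec[OF \<omega>])
      show "integrable lborel (\<lambda>t. K * E t)" by (rule KE_int)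
      show "\<forall>\<^sub>F b in at_top. AE t in lborel. norm (F b \<omega> t) \<le> K * E t"
        using F_bound by (intro always_eventually allI AE_I2) auto
      show "AE t in lborel. ((\<lambda>b. F b \<omega> t) \<longlongrightarrow> \<Phi> t) at_top"
      proof (rule AE_I2)
        fix t :: real
        show "((\<lambda>b. F b \<omega> t) \<longlongrightarrow> \<Phi> t) at_top"
        proof (cases "0 \<le> t")
          case False then show ?thesis by (simp add: F_def \<Phi>_def E_def)
        next
          case True
          have ev: "eventually (\<lambda>b. exp(-\<alpha>*t) * (r * W (b - R \<omega> t) - \<alpha>*\<beta>) = F b \<omega> t) at_top"
            using kp_at_top[OF cad[OF \<omega>] True] by eventually_elim (use True in \<open>auto simp: F_def \<kappa>_def\<close>)
          have fl: "filterlim (\<lambda>b. - R \<omega> t + b) at_top at_top"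
            by (rule filterlim_tendsto_add_at_top[OF tendsto_const filterlim_ident])
          have "((\<lambda>b. W (b - R \<omega> t)) \<longlongrightarrow> Linf) at_top"
            using filterlim_compose[OF W_lim fl] by simp
          then have "((\<lambda>b. exp(-\<alpha>*t) * (r * W (b - R \<omega> t) - \<alpha>*\<beta>)) \<longlongrightarrow> exp(-\<alpha>*t) * (r * Linf - \<alpha>*\<beta>)) at_top"
            by (intro tendsto_intros)
          then have "((\<lambda>b. F b \<omega> t) \<longlongrightarrow> exp(-\<alpha>*t) * (r * Linf - \<alpha>*\<beta>)) at_top"
            by (rule Lim_transform_eventually[OF _ ev])
          then show ?thesis using True by (simp add: \<Phi>_def E_def)
        qed
      qed
    qed
    have "integral\<^sup>L lborel \<Phi> = (r * Linf - \<alpha> * \<beta>) / \<alpha>"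
      using E_val by (simp add: \<Phi>_def[abs_def])
    then have "((\<lambda>b. G b \<omega>) \<longlongrightarrow> \<beta> + (r * Linf - \<alpha> * \<beta>) / \<alpha>) at_top"
      unfolding G_def using lim by (intro tendsto_intros) auto
    moreover have "\<beta> + (r * Linf - \<alpha> * \<beta>) / \<alpha> = r / \<alpha> * Linf" using a by (simp add: field_simps)
    ultimately show ?thesis by simp
  qed
  have part2: "(gfun M X \<alpha> \<beta> r w \<longlongrightarrow> r / \<alpha> * Linf) at_top"
  proof -
    have "((\<lambda>b. integral\<^sup>L M (G b)) \<longlongrightarrow> integral\<^sup>L M (\<lambda>_. r / \<alpha> * Linf)) at_top"
    proof (rule integral_dominated_convergence_at_top[where w = "\<lambda>_. \<beta> + K/\<alpha>"])
      show "(\<lambda>_. r / \<alpha> * Linf) \<in> borel_measurable M" by simp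
      show "G b \<in> borel_measurable M" for b by (rule G_meas)
      show "integrable M (\<lambda>_. \<beta> + K/\<alpha>)" by simp
      show "AE x in M. ((\<lambda>b. G b x) \<longlongrightarrow> r / \<alpha> * Linf) at_top"
        using AE_space by eventually_elim (rule G_lim)
      show "\<forall>\<^sub>F b in at_top. AE x in M. norm (G b x) \<le> \<beta> + K/\<alpha>"
      proof (rule always_eventually, rule allI)
        fix b show "AE x in M. norm (G b x) \<le> \<beta> + K/\<alpha>"
          using AE_space by eventually_elim (use G_bound in auto)
      qed
    qed
    then show ?thesis by (simp add: gfun_eq[abs_def] prob_space)
  qed
  have part3: "r / \<alpha> * Linf < 1"
  proof -
    have "r * Linf < \<alpha>" using Linf(2) r by (simp add: field_simps)
    then show ?thesis using a by (simp add: field_simps)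
  qed
  show ?thesis using part1 part2 part3 by blast
qed

end
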